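(* Let $\Omega\subset\mathbb{C}^n$ be a bounded domain, let $\mathcal R$ and $\mathcal R'$ be quasi-free Hilbert modules of rank $m$ over $A(\Omega)$ with generating sets $\{f_i\}_{i=1}^m$ and $\{g_i\}_{i=1}^m$, and let $X:\mathcal R\to\mathcal R'$ be a module map with $Xf_i=\sum_{j=1}^m\psi_{ij}g_j$ for $1\le i\le m$, where $\Psi=(\psi_{ij})\in\mathrm{Hol}_m(\Omega)$. Then for every $z\in\Omega$ and $1\le i\le m$, \[(X\otimes_{A(\Omega)}1_{\mathbb C_z})(f_i\otimes_{A(\Omega)}1_z)=\sum_{j=1}^m\psi_{ij}(z)\,(g_j\otimes_{A(\Omega)}1_z).\]
   Context: $A(\Omega)$ is the closure, in the supremum norm on $\Omega$, of the set of functions holomorphic on some neighbourhood of $\overline\Omega$; $\ell^2_m$ is the $m$-dimensional Hilbert space ($m$ finite) and $\mathrm{Hol}_m(\Omega)$ is the space of holomorphic $\mathcal L(\ell^2_m)$-valued functions on $\Omega$. A quasi-free Hilbert module of rank $m$ over $A(\Omega)$ is a Hilbert space $\mathcal R$ obtained as the completion of $A(\Omega)\otimes\ell^2_m$ (regarded as $\ell^2_m$-valued holomorphic functions on $\Omega$) with respect to an inner product such that: (1) for each $z\in\Omega$ evaluation at $z$ is bounded, with norm locally uniformly bounded in $z$; (2) $\|\varphi F\|_{\mathcal R}\le\|\varphi\|_{A(\Omega)}\|F\|_{\mathcal R}$; (3) if $(F_i)$ is Cauchy in $\mathcal R$-norm, then $F_i(z)\to0$ for all $z$ iff $\|F_i\|_{\mathcal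 R}\to0$. $A(\Omega)$ acts by multiplication. For $z\in\Omega$, $\mathbb C_z$ is $\mathbb C$ with action $\varphi\cdot\lambda=\varphi(z)\lambda$; the localization $\mathcal R\otimes_{A(\Omega)}\mathbb C_z$ is identified with $\mathcal R/\mathcal R_z$, $\mathcal R_z$ the closure of $\{\varphi h:\varphi\in A(\Omega),\varphi(z)=0,h\in\mathcal R\}$; $h\otimes 1_z$ is the class of $h$, and $X\otimes1_{\mathbb C_z}$ is the induced map $h\otimes1_z\mapsto Xh\otimes1_z$. A generating set is $\{f_1,\dots,f_m\}\subset\mathcal R$ whose $A(\Omega)$-multiples span a dense subspace and with $\{f_i\otimes1_z\}$ a basis of $\mathcal R\otimes_{A(\Omega)}\mathbb C_z$ for each $z$. A module map is a bounded linear $X$ with $X(\varphi h)=\varphi X(h)$. *)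

theory Defs
  imports "HOL-Analysis.Analysis"
begin

text \<open>Points of C^n are vectors z :: complex^'n; the space l^2_m is complex^'m
  (Euclidean norm), m = CARD('m).  Elements of a Hilbert module are
  l^2_m-valued functions on Omega, extended by 0 outside Omega.\<close>

definition holo :: "(complex^'n) set \<Rightarrow> (complex^'n \<Rightarrow> complex) \<Rightarrow> bool" where
  "holo U f \<longleftrightarrow>
     (\<forall>z\<in>U. \<exists>D::complex^'n. (f has_derivative (\<lambda>h. \<Sum>k\<in>UNIV. D$k * h$k)) (at z))"

definition vholo :: "(complex^'n) set \<Rightarrow> (complex^'n \<Rightarrow> complex^'m) \<Rightarrow> bool" where
  "vholo U F \<longleftrightarrow> (\<forall>j. holo U (\<lambda>w. F w $ j))"

definition bounded_domain :: "(complex^'n) set \<Rightarrow> bool" where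
  "bounded_domain \<Omega> \<longleftrightarrow> open \<Omega> \<and> connected \<Omega> \<and> bounded \<Omega> \<and> \<Omega> \<noteq> {}"

definition A_pre :: "(complex^'n) set \<Rightarrow> (complex^'n \<Rightarrow> complex) set" where
  "A_pre \<Omega> = {\<phi>. \<exists>U. open U \<and> closure \<Omega> \<subseteq> U \<and> holo U \<phi>}"

definition A_alg :: "(complex^'n) set \<Rightarrow> (complex^'n \<Rightarrow> complex) set" where
  "A_alg \<Omega> = {\<phi>. \<forall>e>0. \<exists>\<psi>\<in>A_pre \<Omega>. \<forall>z\<in>\<Omega>. cmod (\<phi> z - \<psi> z) < e}"

definition supn :: "(complex^'n) set \<Rightarrow> (complex^'n \<Rightarrow> complex) \<Rightarrow> real" where
  "supn \<Omega> \<phi> = (SUP z\<in>\<Omega>. cmod (\<phi> z))"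

definition restr :: "(complex^'n) set \<Rightarrow> (complex^'n \<Rightarrow> complex^'m) \<Rightarrow> complex^'n \<Rightarrow> complex^'m" where
  "restr \<Omega> F = (\<lambda>w. if w \<in> \<Omega> then F w else 0)"

definition fdiff :: "('a \<Rightarrow> complex^'m) \<Rightarrow> ('a \<Rightarrow> complex^'m) \<Rightarrow> 'a \<Rightarrow> complex^'m" where
  "fdiff F G = (\<lambda>w. F w - G w)"

definition fsc :: "complex \<Rightarrow> ('a \<Rightarrow> complex^'m) \<Rightarrow> 'a \<Rightarrow> complex^'m" where
  "fsc c F = (\<lambda>w. c *s F w)"

definition mult :: "('a \<Rightarrow> complex) \<Rightarrow> ('a \<Rightarrow> complex^'m) \<Rightarrow> 'a \<Rightarrow> complex^'m" where
  "mult \<phi> F = (\<lambda>w. \<phi> w *s F w)"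

text \<open>A(Omega) tensor l^2_m, as l^2_m-valued functions on Omega.\<close>
definition alg_tensor :: "(complex^'n) set \<Rightarrow> (complex^'n \<Rightarrow> complex^'m) set" where
  "alg_tensor \<Omega> = {restr \<Omega> F | F. \<forall>j. (\<lambda>w. F w $ j) \<in> A_alg \<Omega>}"

definition hnorm :: "(('a \<Rightarrow> complex^'m) \<Rightarrow> ('a \<Rightarrow> complex^'m) \<Rightarrow> complex)
    \<Rightarrow> ('a \<Rightarrow> complex^'m) \<Rightarrow> real" where
  "hnorm ip F = sqrt (cmod (ip F F))"

definition hcauchy :: "('a \<Rightarrow> complex^'m) set \<Rightarrow> (('a \<Rightarrow> complex^'m) \<Rightarrow> ('a \<Rightarrow> complex^'m) \<Rightarrow> complex)
    \<Rightarrow> (nat \<Rightarrow> 'a \<Rightarrow> complex^'m) \<Rightarrow> bool" where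
  "hcauchy R ip S \<longleftrightarrow> (\<forall>k. S k \<in> R) \<and>
     (\<forall>e>0. \<exists>N. \<forall>a\<ge>N. \<forall>b\<ge>N. hnorm ip (fdiff (S a) (S b)) < e)"

text \<open>Quasi-free Hilbert module of rank m = CARD('m) over A(Omega), with inner product ip
  (linear in the first, conjugate-linear in the second argument).\<close>
definition qf_module :: "(complex^'n) set \<Rightarrow> (complex^'n \<Rightarrow> complex^'m) set
    \<Rightarrow> ((complex^'n \<Rightarrow> complex^'m) \<Rightarrow> (complex^'n \<Rightarrow> complex^'m) \<Rightarrow> complex) \<Rightarrow> bool" where
  "qf_module \<Omega> R ip \<longleftrightarrow>
     (\<forall>F\<in>R. vholo \<Omega> F \<and> (\<forall>w. w \<notin> \<Omega> \<longrightarrow> F w = 0))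
   \<and> (\<lambda>w. 0) \<in> R
   \<and> (\<forall>F\<in>R. \<forall>G\<in>R. (\<lambda>w. F w + G w) \<in> R)
   \<and> (\<forall>c. \<forall>F\<in>R. fsc c F \<in> R)
   \<and> (\<forall>F\<in>R. \<forall>G\<in>R. \<forall>H\<in>R. ip (\<lambda>w. F w + G w) H = ip F H + ip G H)
   \<and> (\<forall>c. \<forall>F\<in>R. \<forall>H\<in>R. ip (fsc c F) H = c * ip F H)
   \<and> (\<forall>F\<in>R. \<forall>G\<in>R. ip G F = cnj (ip F G))
   \<and> (\<forall>F\<in>R. F \<noteq> (\<lambda>w. 0) \<longrightarrow> Re (ip F F) > 0)
   \<comment> \<open>completeness\<close>
   \<and> (\<forall>S. hcauchy R ip S \<longrightarrow> (\<exists>F\<in>R. (\<lambda>k. hnorm ip (fdiff (S k) F)) \<longlonglongrightarrow> 0))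
   \<comment> \<open>R is the completion of A(Omega) tensor l^2_m\<close>
   \<and> alg_tensor \<Omega> \<subseteq> R
   \<and> (\<forall>F\<in>R. \<forall>e>0. \<exists>G\<in>alg_tensor \<Omega>. hnorm ip (fdiff F G) < e)
   \<comment> \<open>(1) bounded evaluations, locally uniformly\<close>
   \<and> (\<forall>z\<in>\<Omega>. \<exists>r>0. \<exists>C. \<forall>w\<in>ball z r. \<forall>F\<in>R. norm (F w) \<le> C * hnorm ip F)
   \<comment> \<open>(2) contractive module action\<close>
   \<and> (\<forall>\<phi>\<in>A_alg \<Omega>. \<forall>F\<in>R. mult \<phi> F \<in> R \<and> hnorm ip (mult \<phi> F) \<le> supn \<Omega> \<phi> * hnorm ip F)
   \<comment> \<open>(3)\<close>
   \<and> (\<forall>S. hcauchy R ip S \<longrightarrow>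
        ((\<forall>z\<in>\<Omega>. (\<lambda>k. S k z) \<longlonglongrightarrow> 0) \<longleftrightarrow> (\<lambda>k. hnorm ip (S k)) \<longlonglongrightarrow> 0))"

definition loc_sub :: "(complex^'n) set \<Rightarrow> (complex^'n \<Rightarrow> complex^'m) set
    \<Rightarrow> ((complex^'n \<Rightarrow> complex^'m) \<Rightarrow> (complex^'n \<Rightarrow> complex^'m) \<Rightarrow> complex)
    \<Rightarrow> complex^'n \<Rightarrow> (complex^'n \<Rightarrow> complex^'m) set" where
  "loc_sub \<Omega> R ip z =
     {F\<in>R. \<forall>e>0. \<exists>(N::nat) \<phi> h. (\<forall>k<N. \<phi> k \<in> A_alg \<Omega> \<and> \<phi> k z = 0 \<and> h k \<in> R) \<and>
        hnorm ip (fdiff F (\<lambda>w. \<Sum>k<N. \<phi> k w *s h k w)) < e}"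

text \<open>h \<otimes> 1_z: the class of h in R / R_z (as a coset).\<close>
definition loc_class :: "(complex^'n) set \<Rightarrow> (complex^'n \<Rightarrow> complex^'m) set
    \<Rightarrow> ((complex^'n \<Rightarrow> complex^'m) \<Rightarrow> (complex^'n \<Rightarrow> complex^'m) \<Rightarrow> complex)
    \<Rightarrow> complex^'n \<Rightarrow> (complex^'n \<Rightarrow> complex^'m) \<Rightarrow> (complex^'n \<Rightarrow> complex^'m) set" where
  "loc_class \<Omega> R ip z h = {G\<in>R. fdiff h G \<in> loc_sub \<Omega> R ip z}"

text \<open>X \<otimes> 1_{C_z}: the induced map on classes, h \<otimes> 1_z \<mapsto> X h \<otimes> 1_z.\<close>
definition loc_map :: "(complex^'n) set \<Rightarrow> (complex^'n \<Rightarrow> complex^'m) set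
    \<Rightarrow> ((complex^'n \<Rightarrow> complex^'m) \<Rightarrow> (complex^'n \<Rightarrow> complex^'m) \<Rightarrow> complex) \<Rightarrow> complex^'n
    \<Rightarrow> ((complex^'n \<Rightarrow> complex^'m) \<Rightarrow> (complex^'n \<Rightarrow> complex^'m))
    \<Rightarrow> (complex^'n \<Rightarrow> complex^'m) set \<Rightarrow> (complex^'n \<Rightarrow> complex^'m) set" where
  "loc_map \<Omega> R' ip' z X c = (\<Union>h\<in>c. loc_class \<Omega> R' ip' z (X h))"

definition generating_set :: "(complex^'n) set \<Rightarrow> (complex^'n \<Rightarrow> complex^'m) set
    \<Rightarrow> ((complex^'n \<Rightarrow> complex^'m) \<Rightarrow> (complex^'n \<Rightarrow> complex^'m) \<Rightarrow> complex)
    \<Rightarrow> ('m \<Rightarrow> complex^'n \<Rightarrow> complex^'m) \<Rightarrow> bool" where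
  "generating_set \<Omega> R ip f \<longleftrightarrow>
     (\<forall>i. f i \<in> R)
   \<and> (\<forall>F\<in>R. \<forall>e>0. \<exists>\<phi>. (\<forall>i. \<phi> i \<in> A_alg \<Omega>) \<and>
        hnorm ip (fdiff F (\<lambda>w. \<Sum>i\<in>UNIV. \<phi> i w *s f i w)) < e)
   \<and> (\<forall>z\<in>\<Omega>.
        (\<forall>h\<in>R. \<exists>c. fdiff h (\<lambda>w. \<Sum>i\<in>UNIV. c i *s f i w) \<in> loc_sub \<Omega> R ip z)
      \<and> (\<forall>c. (\<lambda>w. \<Sum>i\<in>UNIV. c i *s f i w) \<in> loc_sub \<Omega> R ip z \<longrightarrow> (\<forall>i. c i = 0)))"

definition module_map :: "(complex^'n) set
    \<Rightarrow> (complex^'n \<Rightarrow> complex^'m) set \<Rightarrow> ((complex^'n \<Rightarrow> complex^'m) \<Rightarrow> (complex^'n \<Rightarrow> complex^'m) \<Rightarrow> complex)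
    \<Rightarrow> (complex^'n \<Rightarrow> complex^'m) set \<Rightarrow> ((complex^'n \<Rightarrow> complex^'m) \<Rightarrow> (complex^'n \<Rightarrow> complex^'m) \<Rightarrow> complex)
    \<Rightarrow> ((complex^'n \<Rightarrow> complex^'m) \<Rightarrow> (complex^'n \<Rightarrow> complex^'m)) \<Rightarrow> bool" where
  "module_map \<Omega> R ip R' ip' X \<longleftrightarrow>
     (\<forall>F\<in>R. X F \<in> R')
   \<and> (\<forall>F\<in>R. \<forall>G\<in>R. X (\<lambda>w. F w + G w) = (\<lambda>w. X F w + X G w))
   \<and> (\<forall>c. \<forall>F\<in>R. X (fsc c F) = fsc c (X F))
   \<and> (\<exists>C. \<forall>F\<in>R. hnorm ip' (X F) \<le> C * hnorm ip F)
   \<and> (\<forall>\<phi>\<in>A_alg \<Omega>. \<forall>F\<in>R. X (mult \<phi> F) = mult \<phi> (X F))"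

end

theory Submission
  imports Defs
begin


lemma aux_scale: "(r *\<^sub>R (a::complex)) *s (v::complex^'m) = r *\<^sub>R (a *s v)"
  by (simp add: vec_eq_iff)

lemma ev_linear:
  fixes f :: "'m \<Rightarrow> complex^'m"
  shows "linear (\<lambda>c::complex^'m. \<Sum>i\<in>UNIV. c$i *s f i)"
  by (rule linearI) (auto simp: sum.distrib scaleR_sum_right vector_add_ldistrib aux_scale)

lemma qf_add: "qf_module \<Omega> R ip \<Longrightarrow> F \<in> R \<Longrightarrow> G \<in> R \<Longrightarrow> (\<lambda>w. F w + G w) \<in> R"
  by (simp add: qf_module_def)

lemma qf_fsc: "qf_module \<Omega> R ip \<Longrightarrow> F \<in> R \<Longrightarrow> fsc c F \<in> R"
  by (simp add: qf_module_def)

lemma qf_zero: "qf_module \<Omega> R ip \<Longrightarrow> (\<lambda>w. 0) \<in> R"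
  by (simp add: qf_module_def)

lemma qf_mult: "qf_module \<Omega> R ip \<Longrightarrow> \<phi> \<in> A_alg \<Omega> \<Longrightarrow> F \<in> R \<Longrightarrow> mult \<phi> F \<in> R"
  by (simp add: qf_module_def)

lemma qf_diff:
  assumes "qf_module \<Omega> R ip" "F \<in> R" "G \<in> R"
  shows "fdiff F G \<in> R"
proof -
  have "fdiff F G = (\<lambda>w. F w + fsc (-1) G w)"
    by (simp add: fdiff_def fsc_def fun_eq_iff vec_eq_iff)
  then show ?thesis using assms qf_add qf_fsc by metis
qed

lemma qf_sum:
  assumes "qf_module \<Omega> R ip" "finite A"
  shows "(\<forall>k\<in>A. \<Phi> k \<in> R) \<Longrightarrow> (\<lambda>w. \<Sum>k\<in>A. \<Phi> k w) \<in> R"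
  using assms(2)
proof (induction A rule: finite_induct)
  case empty
  then show ?case using qf_zero[OF assms(1)] by simp
next
  case (insert x F)
  then have "(\<lambda>w. \<Phi> x w + (\<Sum>k\<in>F. \<Phi> k w)) \<in> R"
    using qf_add[OF assms(1)] by auto
  then show ?case using insert by simp
qed

lemma qf_eval:
  assumes "qf_module \<Omega> R ip" "z \<in> \<Omega>"
  shows "\<exists>C. \<forall>F\<in>R. norm (F z) \<le> C * hnorm ip F"
proof -
  have "\<forall>z\<in>\<Omega>. \<exists>r>0. \<exists>C. \<forall>w\<in>ball z r. \<forall>F\<in>R. norm (F w) \<le> C * hnorm ip F"
    using assms(1) unfolding qf_module_def by (elim conjE) assumption
  then obtain r C where "r > 0" "\<forall>w\<in>ball z r. \<forall>F\<in>R. norm (F w) \<le> C * hnorm ip F"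
    using assms(2) by blast
  then show ?thesis by (metis centre_in_ball)
qed

lemma qf_alg: "qf_module \<Omega> R ip \<Longrightarrow> alg_tensor \<Omega> \<subseteq> R"
  unfolding qf_module_def by (elim conjE) assumption

lemma mmR: "module_map \<Omega> R ip R' ip' X \<Longrightarrow> F \<in> R \<Longrightarrow> X F \<in> R'"
  unfolding module_map_def by blast
lemma mmadd: "module_map \<Omega> R ip R' ip' X \<Longrightarrow> F \<in> R \<Longrightarrow> G \<in> R \<Longrightarrow> X (\<lambda>w. F w + G w) = (\<lambda>w. X F w + X G w)"
  unfolding module_map_def by blast
lemma mmfsc: "module_map \<Omega> R ip R' ip' X \<Longrightarrow> F \<in> R \<Longrightarrow> X (fsc c F) = fsc c (X F)"
  unfolding module_map_def by blast
lemma mmbd: "module_map \<Omega> R ip R' ip' X \<Longrightarrow> \<exists>C. \<forall>F\<in>R. hnorm ip' (X F) \<le> C * hnorm ip F"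
  unfolding module_map_def by (elim conjE) assumption
lemma mmmult: "module_map \<Omega> R ip R' ip' X \<Longrightarrow> \<phi> \<in> A_alg \<Omega> \<Longrightarrow> F \<in> R \<Longrightarrow> X (mult \<phi> F) = mult \<phi> (X F)"
  unfolding module_map_def by blast

lemma hnorm_nonneg: "hnorm ip F \<ge> 0"
  by (simp add: hnorm_def)

lemma vanish_lim:
  assumes Q: "qf_module \<Omega> R ip" and z: "z \<in> \<Omega>" and F: "F \<in> R"
    and A: "\<forall>e>0. \<exists>S\<in>R. S z = 0 \<and> hnorm ip (fdiff F S) < e"
  shows "F z = 0"
proof (rule ccontr)
  assume ne: "F z \<noteq> 0"
  obtain C where C: "\<forall>F\<in>R. norm (F z) \<le> C * hnorm ip F" using qf_eval[OF Q z] by blast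
  define e where "e = norm (F z) / (\<bar>C\<bar> + 1)"
  have e0: "e > 0" using ne by (simp add: e_def add_pos_nonneg)
  then obtain S where S: "S \<in> R" "S z = 0" "hnorm ip (fdiff F S) < e" using A by blast
  have "norm (F z) = norm (fdiff F S z)" using S by (simp add: fdiff_def)
  also have "\<dots> \<le> C * hnorm ip (fdiff F S)" using C qf_diff[OF Q F S(1)] by blast
  also have "\<dots> \<le> \<bar>C\<bar> * hnorm ip (fdiff F S)"
    by (rule mult_right_mono[OF abs_ge_self hnorm_nonneg])
  also have "\<dots> \<le> \<bar>C\<bar> * e" using S(3) by (simp add: mult_left_mono)
  also have "\<dots> < norm (F z)"
  proof -
    have "\<bar>C\<bar> * e = norm (F z) * (\<bar>C\<bar> / (\<bar>C\<bar> + 1))" by (simp add: e_def)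
    also have "\<dots> < norm (F z) * 1"
      using ne by (intro mult_strict_left_mono) auto
    finally show ?thesis by simp
  qed
  finally show False by simp
qed

lemma sum_mult_in:
  fixes N :: nat
  assumes Q: "qf_module \<Omega> R ip" and "\<forall>k<N. \<phi> k \<in> A_alg \<Omega> \<and> h k \<in> R"
  shows "(\<lambda>w. \<Sum>k<N. \<phi> k w *s h k w) \<in> R"
proof -
  have "(\<lambda>w. \<Sum>k\<in>{..<N}. mult (\<phi> k) (h k) w) \<in> R"
    using assms by (intro qf_sum[OF Q finite_lessThan]) (auto intro: qf_mult)
  then show ?thesis by (simp add: mult_def)
qed

lemma locsub_zero:
  assumes Q: "qf_module \<Omega> R ip" and z: "z \<in> \<Omega>" and F: "F \<in> loc_sub \<Omega> R ip z"
  shows "F z = 0"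
proof -
  have FR: "F \<in> R" using F by (simp add: loc_sub_def)
  show ?thesis
  proof (rule vanish_lim[OF Q z FR], intro allI impI)
    fix e :: real assume "e > 0"
    then obtain N :: nat and \<phi> h where H: "\<forall>k<N. \<phi> k \<in> A_alg \<Omega> \<and> \<phi> k z = 0 \<and> h k \<in> R"
      "hnorm ip (fdiff F (\<lambda>w. \<Sum>k<N. \<phi> k w *s h k w)) < e"
      using F unfolding loc_sub_def by blast
    let ?S = "\<lambda>w. \<Sum>k<N. \<phi> k w *s h k w"
    have SR: "?S \<in> R" using H by (intro sum_mult_in[OF Q]) auto
    have Sz: "?S z = 0" using H by (intro sum.neutral) auto
    show "\<exists>S\<in>R. S z = 0 \<and> hnorm ip (fdiff F S) < e"
    proof (rule bexI[where x="?S"])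
      show "?S z = 0 \<and> hnorm ip (fdiff F ?S) < e" using Sz H(2) by simp
      show "?S \<in> R" by (rule SR)
    qed
  qed
qed

lemma X_diff:
  assumes M: "module_map \<Omega> R ip R' ip' X" and Q: "qf_module \<Omega> R ip" and F: "F \<in> R" and G: "G \<in> R"
  shows "X (fdiff F G) = fdiff (X F) (X G)"
proof -
  have e: "fdiff F G = (\<lambda>w. F w + fsc (-1) G w)"
    by (simp add: fdiff_def fsc_def fun_eq_iff vec_eq_iff)
  have "X (\<lambda>w. F w + fsc (-1) G w) = (\<lambda>w. X F w + X (fsc (-1) G) w)"
    using mmadd[OF M F qf_fsc[OF Q G]] .
  also have "X (fsc (-1) G) = fsc (-1) (X G)" using mmfsc[OF M G] .
  finally show ?thesis using e by (simp add: fdiff_def fsc_def fun_eq_iff vec_eq_iff)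
qed

lemma X_sum:
  fixes N :: nat
  assumes M: "module_map \<Omega> R ip R' ip' X" and Q: "qf_module \<Omega> R ip"
  shows "(\<forall>k<N. \<phi> k \<in> A_alg \<Omega> \<and> h k \<in> R) \<Longrightarrow>
    X (\<lambda>w. \<Sum>k<N. \<phi> k w *s h k w) = (\<lambda>w. \<Sum>k<N. \<phi> k w *s X (h k) w)"
proof (induction N)
  case 0
  have "X (\<lambda>w. 0) = X (fsc 0 (\<lambda>w. 0))" by (simp add: fsc_def)
  also have "\<dots> = fsc 0 (X (\<lambda>w. 0))" using mmfsc[OF M qf_zero[OF Q]] .
  finally show ?case by (simp add: fsc_def)
next
  case (Suc N)
  let ?S = "\<lambda>w. \<Sum>k<N. \<phi> k w *s h k w"
  have A: "?S \<in> R" using Suc.prems by (intro sum_mult_in[OF Q]) auto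
  have B: "mult (\<phi> N) (h N) \<in> R" using Suc.prems by (intro qf_mult[OF Q]) auto
  have eq: "(\<lambda>w. \<Sum>k<Suc N. \<phi> k w *s h k w) = (\<lambda>w. ?S w + mult (\<phi> N) (h N) w)"
    by (simp add: mult_def)
  have IH: "X ?S = (\<lambda>w. \<Sum>k<N. \<phi> k w *s X (h k) w)"
    using Suc.IH Suc.prems by simp
  have XB: "X (mult (\<phi> N) (h N)) = mult (\<phi> N) (X (h N))"
    using mmmult[OF M] Suc.prems by simp
  have "X (\<lambda>w. \<Sum>k<Suc N. \<phi> k w *s h k w) = (\<lambda>w. X ?S w + X (mult (\<phi> N) (h N)) w)"
    unfolding eq by (rule mmadd[OF M A B])
  also have "\<dots> = (\<lambda>w. (\<Sum>k<N. \<phi> k w *s X (h k) w) + mult (\<phi> N) (X (h N)) w)"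
    unfolding IH XB ..
  also have "\<dots> = (\<lambda>w. \<Sum>k<Suc N. \<phi> k w *s X (h k) w)"
    by (simp add: mult_def)
  finally show ?case .
qed

lemma X_locsub:
  assumes Q: "qf_module \<Omega> R ip" and Q': "qf_module \<Omega> R' ip'"
    and M: "module_map \<Omega> R ip R' ip' X" and z: "z \<in> \<Omega>" and F: "F \<in> loc_sub \<Omega> R ip z"
  shows "X F z = 0"
proof -
  have FR: "F \<in> R" using F by (simp add: loc_sub_def)
  have XR: "\<And>G. G \<in> R \<Longrightarrow> X G \<in> R'" using M by (rule mmR)
  obtain CX where CX: "\<forall>F\<in>R. hnorm ip' (X F) \<le> CX * hnorm ip F"
    using mmbd[OF M] by blast
  show ?thesis
  proof (rule vanish_lim[OF Q' z XR[OF FR]], intro allI impI)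
    fix e :: real assume e: "e > 0"
    define e' where "e' = e / (\<bar>CX\<bar> + 1)"
    have "e' > 0" using e by (simp add: e'_def add_pos_nonneg)
    then obtain N :: nat and \<phi> h where H: "\<forall>k<N. \<phi> k \<in> A_alg \<Omega> \<and> \<phi> k z = 0 \<and> h k \<in> R"
      "hnorm ip (fdiff F (\<lambda>w. \<Sum>k<N. \<phi> k w *s h k w)) < e'"
      using F unfolding loc_sub_def by blast
    let ?S = "\<lambda>w. \<Sum>k<N. \<phi> k w *s h k w"
    let ?S' = "\<lambda>w. \<Sum>k<N. \<phi> k w *s X (h k) w"
    have SR: "?S \<in> R" using H by (intro sum_mult_in[OF Q]) auto
    have S'R: "?S' \<in> R'" using H XR by (intro sum_mult_in[OF Q']) auto
    have S'z: "?S' z = 0" using H by (intro sum.neutral) auto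
    have XS: "X ?S = ?S'" by (rule X_sum[OF M Q]) (use H in auto)
    have eq: "fdiff (X F) ?S' = X (fdiff F ?S)" unfolding X_diff[OF M Q FR SR] XS ..
    have "hnorm ip' (X (fdiff F ?S)) \<le> CX * hnorm ip (fdiff F ?S)"
      using CX qf_diff[OF Q FR SR] by blast
    then have "hnorm ip' (fdiff (X F) ?S') \<le> CX * hnorm ip (fdiff F ?S)"
      unfolding eq .
    also have "\<dots> \<le> \<bar>CX\<bar> * hnorm ip (fdiff F ?S)"
      by (rule mult_right_mono[OF abs_ge_self hnorm_nonneg])
    also have "\<dots> \<le> \<bar>CX\<bar> * e'" using H(2) by (simp add: mult_left_mono)
    also have "\<dots> < e"
    proof -
      have "\<bar>CX\<bar> * e' = e * (\<bar>CX\<bar> / (\<bar>CX\<bar> + 1))" by (simp add: e'_def)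
      also have "\<dots> < e * 1" using e by (intro mult_strict_left_mono) auto
      finally show ?thesis by simp
    qed
    finally have lt: "hnorm ip' (fdiff (X F) ?S') < e" .
    show "\<exists>S\<in>R'. S z = 0 \<and> hnorm ip' (fdiff (X F) S) < e"
    proof (rule bexI[where x="?S'"])
      show "?S' z = 0 \<and> hnorm ip' (fdiff (X F) ?S') < e" using S'z lt by simp
      show "?S' \<in> R'" by (rule S'R)
    qed
  qed
qed

lemma const_A: "(\<lambda>w. c) \<in> A_alg \<Omega>"
proof -
  have "holo UNIV (\<lambda>w::complex^'n. c)"
    unfolding holo_def
  proof
    fix z :: "complex^'n"
    have "((\<lambda>w::complex^'n. c) has_derivative (\<lambda>h. \<Sum>k\<in>UNIV. (0::complex^'n)$k * h$k)) (at z)"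
      by simp
    then show "\<exists>D::complex^'n. ((\<lambda>w. c) has_derivative (\<lambda>h. \<Sum>k\<in>UNIV. D$k * h$k)) (at z)" by blast
  qed
  then have "(\<lambda>w. c) \<in> A_pre \<Omega>" unfolding A_pre_def by blast
  then show ?thesis unfolding A_alg_def by force
qed

lemma const_in:
  assumes Q: "qf_module \<Omega> R ip"
  shows "restr \<Omega> (\<lambda>w. v) \<in> R"
proof -
  have "\<forall>j. (\<lambda>w. (\<lambda>w. v) w $ j) \<in> A_alg \<Omega>" by (intro allI const_A)
  then have "restr \<Omega> (\<lambda>w. v) \<in> alg_tensor \<Omega>" unfolding alg_tensor_def by blast
  then show ?thesis using qf_alg[OF Q] by blast
qed

lemma locsub_char:
  fixes f :: "'m \<Rightarrow> complex^'n \<Rightarrow> complex^'m"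
  assumes Q: "qf_module \<Omega> R ip" and G: "generating_set \<Omega> R ip f" and z: "z \<in> \<Omega>"
  shows "loc_sub \<Omega> R ip z = {F\<in>R. F z = 0}"
proof
  show "loc_sub \<Omega> R ip z \<subseteq> {F\<in>R. F z = 0}"
    using locsub_zero[OF Q z] by (auto simp: loc_sub_def)
next
  have gen: "\<And>h. h \<in> R \<Longrightarrow> \<exists>c. fdiff h (\<lambda>w. \<Sum>i\<in>UNIV. c i *s f i w) \<in> loc_sub \<Omega> R ip z"
    using G z unfolding generating_set_def by blast
  define ev where "ev = (\<lambda>c::complex^'m. \<Sum>i\<in>UNIV. c$i *s f i z)"
  have lin: "linear ev" unfolding ev_def by (rule ev_linear)
  have "surj ev"
  proof -
    { fix v :: "complex^'m"
      obtain c where c: "fdiff (restr \<Omega> (\<lambda>w. v)) (\<lambda>w. \<Sum>i\<in>UNIV. c i *s f i w) \<in> loc_sub \<Omega> R ip z"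
        using gen[OF const_in[OF Q]] by blast
      have "v - (\<Sum>i\<in>UNIV. c i *s f i z) = 0"
        using locsub_zero[OF Q z c] z by (simp add: fdiff_def restr_def)
      then have "v = ev (\<chi> i. c i)" by (simp add: ev_def)
      then have "v \<in> range ev" by blast }
    then show ?thesis by blast
  qed
  then have inj: "inj ev" using lin linear_surj_imp_inj by blast
  show "{F\<in>R. F z = 0} \<subseteq> loc_sub \<Omega> R ip z"
  proof
    fix F assume F: "F \<in> {F\<in>R. F z = 0}"
    obtain c where c: "fdiff F (\<lambda>w. \<Sum>i\<in>UNIV. c i *s f i w) \<in> loc_sub \<Omega> R ip z"
      using gen F by blast
    have "0 - (\<Sum>i\<in>UNIV. c i *s f i z) = 0"
      using locsub_zero[OF Q z c] F by (simp add: fdiff_def)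
    then have "ev (\<chi> i. c i) = ev 0" by (simp add: ev_def)
    then have "(\<chi> i. c i) = 0" using inj by (simp add: inj_eq)
    then have "\<forall>i. c i = 0" by (simp add: vec_eq_iff)
    then have "fdiff F (\<lambda>w. \<Sum>i\<in>UNIV. c i *s f i w) = F" by (simp add: fdiff_def)
    then show "F \<in> loc_sub \<Omega> R ip z" using c by simp
  qed
qed

lemma class_char:
  assumes Q: "qf_module \<Omega> R ip" and G: "generating_set \<Omega> R ip f" and z: "z \<in> \<Omega>" and h: "h \<in> R"
  shows "loc_class \<Omega> R ip z h = {G\<in>R. G z = h z}"
  unfolding loc_class_def locsub_char[OF Q G z]
  using qf_diff[OF Q h] by (auto simp: fdiff_def)

theorem lemma6:
  fixes \<Omega> :: "(complex^'n) set"
    and R R' :: "(complex^'n \<Rightarrow> complex^'m) set"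
    and ip ip' :: "(complex^'n \<Rightarrow> complex^'m) \<Rightarrow> (complex^'n \<Rightarrow> complex^'m) \<Rightarrow> complex"
    and f g :: "'m \<Rightarrow> complex^'n \<Rightarrow> complex^'m"
    and X :: "(complex^'n \<Rightarrow> complex^'m) \<Rightarrow> (complex^'n \<Rightarrow> complex^'m)"
    and \<psi> :: "'m \<Rightarrow> 'm \<Rightarrow> complex^'n \<Rightarrow> complex"
  assumes "bounded_domain \<Omega>"
    and "qf_module \<Omega> R ip" and "qf_module \<Omega> R' ip'"
    and "generating_set \<Omega> R ip f" and "generating_set \<Omega> R' ip' g"
    and "module_map \<Omega> R ip R' ip' X"
    and "\<forall>i j. holo \<Omega> (\<psi> i j)"
    and "\<forall>i. X (f i) = (\<lambda>w. \<Sum>j\<in>UNIV. \<psi> i j w *s g j w)"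
    and "z \<in> \<Omega>"
  shows "loc_map \<Omega> R' ip' z X (loc_class \<Omega> R ip z (f i))
           = loc_class \<Omega> R' ip' z (\<lambda>w. \<Sum>j\<in>UNIV. \<psi> i j z *s g j w)"
  proof -
  note Q = assms(2) and Q' = assms(3) and Gf = assms(4) and Gg = assms(5) and M = assms(6)
    and z = assms(9)
  have fi: "f i \<in> R" using Gf unfolding generating_set_def by (elim conjE) blast
  have XR: "\<And>G. G \<in> R \<Longrightarrow> X G \<in> R'" using M by (rule mmR)
  have gR: "\<And>j. g j \<in> R'" using Gg unfolding generating_set_def by (elim conjE) blast
  let ?P = "\<lambda>w. \<Sum>j\<in>UNIV. \<psi> i j z *s g j w"
  have PR: "?P \<in> R'"
  proof -
    have "(\<lambda>w. \<Sum>j\<in>UNIV. fsc (\<psi> i j z) (g j) w) \<in> R'"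
      using gR by (intro qf_sum[OF Q']) (auto intro: qf_fsc[OF Q'])
    then show ?thesis by (simp add: fsc_def)
  qed
  have Xfz: "X (f i) z = ?P z" using assms(8) by simp
  have key: "\<And>h. h \<in> R \<Longrightarrow> h z = f i z \<Longrightarrow> X h z = X (f i) z"
  proof -
    fix h assume h: "h \<in> R" "h z = f i z"
    have "fdiff h (f i) \<in> loc_sub \<Omega> R ip z"
      using locsub_char[OF Q Gf z] qf_diff[OF Q h(1) fi] h by (simp add: fdiff_def)
    then have "X (fdiff h (f i)) z = 0" by (rule X_locsub[OF Q Q' M z])
    then show "X h z = X (f i) z" using X_diff[OF M Q h(1) fi] by (simp add: fdiff_def)
  qed
  have cls: "\<And>h. h \<in> R \<Longrightarrow> loc_class \<Omega> R' ip' z (X h) = {G\<in>R'. G z = X h z}"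
    using class_char[OF Q' Gg z XR] .
  have "loc_map \<Omega> R' ip' z X (loc_class \<Omega> R ip z (f i))
      = (\<Union>h\<in>{G\<in>R. G z = f i z}. loc_class \<Omega> R' ip' z (X h))"
    unfolding loc_map_def class_char[OF Q Gf z fi] ..
  also have "\<dots> = (\<Union>h\<in>{G\<in>R. G z = f i z}. {G\<in>R'. G z = X h z})"
    using cls by (intro SUP_cong) auto
  also have "\<dots> = {G\<in>R'. G z = X (f i) z}"
  proof (rule equalityI)
    show "(\<Union>h\<in>{G\<in>R. G z = f i z}. {G\<in>R'. G z = X h z}) \<subseteq> {G\<in>R'. G z = X (f i) z}"
    proof
      fix G assume "G \<in> (\<Union>h\<in>{G\<in>R. G z = f i z}. {G\<in>R'. G z = X h z})"
      then obtain h where "h \<in> R" "h z = f i z" "G \<in> R'" "G z = X h z" by blast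
      then show "G \<in> {G\<in>R'. G z = X (f i) z}" using key by simp
    qed
  next
    show "{G\<in>R'. G z = X (f i) z} \<subseteq> (\<Union>h\<in>{G\<in>R. G z = f i z}. {G\<in>R'. G z = X h z})"
      using fi by blast
  qed
  also have "\<dots> = loc_class \<Omega> R' ip' z ?P"
    using class_char[OF Q' Gg z PR] Xfz by simp
  finally show ?thesis .
qed

end
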